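(* Let $X_1,\dots,X_n$ be random variables and let $\epsilon_1,\dots,\epsilon_n$ be conditionally independent given $\underline{X}=(X_1,\dots,X_n)$, with $\mathbb{E}(\epsilon_i\mid\underline X)=0$, $\mathbb{V}(\epsilon_i\mid\underline X)\le\sigma^2$, and satisfying the Bernstein moment condition $\mathbb{E}(|\epsilon_i|^k\mid\underline X)\le\frac12k!\eta^{k-2}\mathbb{V}(\epsilon_i\mid\underline X)$ for $k=3,4,\dots$, with $\eta>0$. Let $\mathcal{G}$ be a countable class of measurable functions with $|g(x)|\le K$ for all $g\in\mathcal{G}$ and all $x$, and let $L:\mathcal{G}\to[0,\infty)$ satisfy $\sum_{g\in\mathcal{G}}e^{-L(g)}\le1$. Then for every $A>0$, with $\gamma=A\sigma^2/2+K\eta$, $$\mathbb{E}\sup_{g\in\mathcal{G}}\Big\{\frac1n\sum_{i=1}^n\epsilon_ig(X_i)-\frac{\gamma}{n}L(g)-\frac{1}{An}\sum_{i=1}^ng^2(X_i)\Big\}\le0.$$ *)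

theory Defs
  imports "HOL-Probability.Probability"
begin

definition gen_subalg :: "'a measure \<Rightarrow> 'x measure \<Rightarrow> ('i \<Rightarrow> 'a \<Rightarrow> 'x) \<Rightarrow> 'i set \<Rightarrow> 'a measure" where
  "gen_subalg M N X I =
     restr_to_subalg M (sigma (space M) (\<Union>i\<in>I. {X i -` B \<inter> space M | B. B \<in> sets N}))"

definition cond_var :: "'a measure \<Rightarrow> 'a measure \<Rightarrow> ('a \<Rightarrow> real) \<Rightarrow> 'a \<Rightarrow> ennreal" where
  "cond_var M F f =
     nn_cond_exp M F (\<lambda>w. ennreal ((f w - real_cond_exp M F f w)^2))"

definition cond_indep_vars :: "'a measure \<Rightarrow> 'a measure \<Rightarrow> ('i \<Rightarrow> 'a \<Rightarrow> real) \<Rightarrow> 'i set \<Rightarrow> bool" where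
  "cond_indep_vars M F e I \<longleftrightarrow>
     (\<forall>B. (\<forall>i\<in>I. B i \<in> sets borel) \<longrightarrow>
        (AE w in M. real_cond_exp M F (\<lambda>v. \<Prod>i\<in>I. indicator (B i) (e i v)) w
                  = (\<Prod>i\<in>I. real_cond_exp M F (\<lambda>v. indicator (B i) (e i v)) w)))"

end

theory Submission imports Defs begin

lemma exp_rem_sums: "(\<lambda>k. y^(k+2) / fact (k+2)) sums (exp y - 1 - (y::real))"
proof -
  have "(\<lambda>n. y^n / fact n) sums exp y"
    using exp_converges[of y] by (simp add: divide_inverse mult.commute)
  then have "(\<lambda>k. y^(k+2) / fact (k+2)) sums (exp y - (\<Sum>i<2. y^i / fact i))"
    using sums_iff_shift[of "\<lambda>n. y^n / fact n" 2 "exp y - (\<Sum>i<2. y^i / fact i)"] by simp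
  then show ?thesis by (simp add: eval_nat_numeral diff_diff_add)
qed

lemma exp_rem_le: "ennreal (exp y - 1 - y) \<le> (\<Sum>k. ennreal (\<bar>y\<bar>^(k+2) / fact (k+2)))"
proof -
  have s1: "(\<lambda>k. y^(k+2) / fact (k+2)) sums (exp y - 1 - y)" by (rule exp_rem_sums)
  have s2: "(\<lambda>k. \<bar>y\<bar>^(k+2) / fact (k+2)) sums (exp \<bar>y\<bar> - 1 - \<bar>y\<bar>)" by (rule exp_rem_sums)
  have 1: "exp y - 1 - y \<le> (\<Sum>k. \<bar>y\<bar>^(k+2) / fact (k+2))"
    unfolding sums_unique[OF s1]
  proof (rule suminf_le)
    have pw: "y^n \<le> \<bar>y\<bar>^n" for n by (metis abs_ge_self power_abs)
    show "y^(k+2) / fact (k+2) \<le> \<bar>y\<bar>^(k+2) / fact (k+2)" for k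
      by (rule divide_right_mono[OF pw]) auto
    show "summable (\<lambda>k. y^(k+2) / fact (k+2))" using s1 sums_summable by blast
    show "summable (\<lambda>k. \<bar>y\<bar>^(k+2) / fact (k+2))" using s2 sums_summable by blast
  qed
  have 2: "ennreal (\<Sum>k. \<bar>y\<bar>^(k+2) / fact (k+2)) = (\<Sum>k. ennreal (\<bar>y\<bar>^(k+2) / fact (k+2)))"
    by (rule suminf_ennreal2[symmetric]) (use s2 in \<open>auto simp: sums_iff\<close>)
  from ennreal_leI[OF 1] show ?thesis unfolding 2 .
qed

lemma key_bound:
  fixes A \<eta> K \<sigma>2 \<gamma> c v :: real
  assumes A: "A > 0" and eta: "\<eta> > 0" and K: "K > 0" and s2: "\<sigma>2 \<ge> 0"
    and gam: "\<gamma> = A * \<sigma>2 / 2 + K * \<eta>" and c: "\<bar>c\<bar> \<le> K" and v: "\<bar>v\<bar> \<le> \<bar>c\<bar> / \<gamma>"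
  shows "ennreal (exp (- (c^2 / (A * \<gamma>)))) * (1 + (\<Sum>k. ennreal (\<bar>v\<bar>^(k+2) * \<eta>^k / 2)) * ennreal \<sigma>2) \<le> 1"
proof (cases "\<sigma>2 = 0")
  case True
  have g: "\<gamma> > 0" using gam K eta True by simp
  have "exp (- (c^2 / (A * \<gamma>))) \<le> 1" using A g by simp
  then show ?thesis using True by (simp add: ennreal_le_1[symmetric] del: ennreal_le_1)
next
  case False
  then have s2p: "\<sigma>2 > 0" using s2 by simp
  have g: "\<gamma> > 0" using gam K eta s2p A by (simp add: add_pos_pos)
  define q where "q = \<bar>v\<bar> * \<eta>"
  have q0: "q \<ge> 0" unfolding q_def using eta by simp
  have "\<bar>v\<bar> * \<eta> \<le> \<bar>c\<bar> / \<gamma> * \<eta>" by (rule mult_right_mono) (use v eta in auto)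
  also have "\<dots> \<le> K / \<gamma> * \<eta>" using c g eta by (simp add: divide_right_mono mult_right_mono)
  finally have q1: "q \<le> K * \<eta> / \<gamma>" unfolding q_def by simp
  have "1 - K * \<eta> / \<gamma> = A * \<sigma>2 / 2 / \<gamma>" using g gam by (simp add: field_simps)
  then have oneq: "1 - q \<ge> A * \<sigma>2 / 2 / \<gamma>" using q1 by linarith
  have pos: "A * \<sigma>2 / 2 / \<gamma> > 0" using A s2p g by simp
  have ql: "q < 1" using oneq pos by linarith
  have sums: "(\<lambda>k. \<bar>v\<bar>^(k+2) * \<eta>^k / 2) sums (v^2 / 2 * (1 / (1 - q)))"
  proof -
    have "(\<lambda>k. q^k) sums (1 / (1 - q))" using q0 ql by (intro geometric_sums) simp
    then have "(\<lambda>k. v^2 / 2 * q^k) sums (v^2 / 2 * (1 / (1 - q)))" by (rule sums_mult)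
    moreover have "v^2 / 2 * q^k = \<bar>v\<bar>^(k+2) * \<eta>^k / 2" for k
      unfolding q_def by (simp add: power_add power_mult_distrib power2_eq_square)
    ultimately show ?thesis by simp
  qed
  define y where "y = v^2 / 2 * (1 / (1 - q)) * \<sigma>2"
  have "(\<Sum>k. ennreal (\<bar>v\<bar>^(k+2) * \<eta>^k / 2)) = ennreal (v^2 / 2 * (1 / (1 - q)))"
    by (rule suminf_ennreal_eq[OF _ sums]) (use eta in simp)
  moreover have y0: "y \<ge> 0" unfolding y_def using ql s2 by simp
  moreover have "0 \<le> v^2 / 2 * (1 / (1 - q))" using ql by simp
  ultimately have "(\<Sum>k. ennreal (\<bar>v\<bar>^(k+2) * \<eta>^k / 2)) * ennreal \<sigma>2 = ennreal y"
    unfolding y_def by (simp add: ennreal_mult'[symmetric])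
  then have eq: "1 + (\<Sum>k. ennreal (\<bar>v\<bar>^(k+2) * \<eta>^k / 2)) * ennreal \<sigma>2 = ennreal (1 + y)"
    using y0 by simp
  have "y \<le> v^2 / 2 * (1 / (A * \<sigma>2 / 2 / \<gamma>)) * \<sigma>2"
  proof -
    have "1 / (1 - q) \<le> 1 / (A * \<sigma>2 / 2 / \<gamma>)"
    proof (rule divide_left_mono)
      have "1 - q > 0" using oneq pos by linarith
      then show "0 < (1 - q) * (A * \<sigma>2 / 2 / \<gamma>)" using pos by (rule mult_pos_pos)
    qed (use oneq in auto)
    then show ?thesis unfolding y_def using s2 by (intro mult_right_mono mult_left_mono) auto
  qed
  also have "\<dots> = v^2 * \<gamma> / A" using s2p A g by (simp add: field_simps)
  also have "\<dots> \<le> (c / \<gamma>)^2 * \<gamma> / A"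
  proof -
    have "v^2 \<le> (c/\<gamma>)^2" using v g by (metis abs_ge_zero abs_divide abs_of_pos power2_abs power_mono)
    then show ?thesis using g A by (intro divide_right_mono mult_right_mono) auto
  qed
  also have "\<dots> = c^2 / (A * \<gamma>)" using g A by (simp add: field_simps power2_eq_square)
  finally have ya: "y \<le> c^2 / (A * \<gamma>)" .
  have "exp (- (c^2 / (A * \<gamma>))) * (1 + y) \<le> exp (- (c^2 / (A * \<gamma>))) * exp y"
    by (intro mult_left_mono) (use exp_ge_add_one_self[of y] in auto)
  also have "\<dots> = exp (y - c^2 / (A * \<gamma>))" by (simp add: exp_add[symmetric])
  also have "\<dots> \<le> 1" using ya by simp
  finally have r1: "exp (- (c^2 / (A * \<gamma>))) * (1 + y) \<le> 1" .
  have "ennreal (exp (- (c^2 / (A * \<gamma>))) * (1 + y)) = ennreal (exp (- (c^2 / (A * \<gamma>)))) * ennreal (1 + y)"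
    by (rule ennreal_mult) (use y0 in auto)
  moreover have "ennreal (exp (- (c^2 / (A * \<gamma>))) * (1 + y)) \<le> 1"
    using ennreal_leI[OF r1] by simp
  ultimately show ?thesis unfolding eq by simp
qed

definition rnd :: "nat \<Rightarrow> real \<Rightarrow> real" where
  "rnd m y = real_of_int (if y \<ge> 0 then \<lfloor>y * 2^m\<rfloor> else - \<lfloor>- y * 2^m\<rfloor>) / 2^m"

lemma rnd_abs_eq: "\<bar>rnd m y\<bar> = real_of_int \<lfloor>\<bar>y\<bar> * 2^m\<rfloor> / 2^m"
proof (cases "y \<ge> 0")
  case True
  have "0 \<le> real_of_int \<lfloor>y * 2^m\<rfloor>" using True by simp
  then show ?thesis using True by (simp add: rnd_def)
next
  case False
  have h: "0 \<le> -y * 2^m" using False by (intro mult_nonneg_nonneg) auto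
  have "0 \<le> real_of_int \<lfloor>-y * 2^m\<rfloor>" using h by simp
  then show ?thesis using False by (simp add: rnd_def)
qed

lemma rnd_abs: "\<bar>rnd m y\<bar> \<le> \<bar>y\<bar>"
proof -
  have "real_of_int \<lfloor>\<bar>y\<bar> * 2^m\<rfloor> \<le> \<bar>y\<bar> * 2^m" by simp
  then have "real_of_int \<lfloor>\<bar>y\<bar> * 2^m\<rfloor> / 2^m \<le> \<bar>y\<bar> * 2^m / 2^m"
    by (rule divide_right_mono) simp
  then show ?thesis unfolding rnd_abs_eq by simp
qed

lemma rnd_err: "\<bar>rnd m y - y\<bar> \<le> 1 / 2^m"
proof -
  have "rnd m y - y = (if y \<ge> 0 then real_of_int \<lfloor>y * 2^m\<rfloor> - y * 2^m else - real_of_int \<lfloor>- y * 2^m\<rfloor> - y * 2^m) / 2^m"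
    by (simp add: rnd_def diff_divide_distrib)
  moreover have "\<bar>(if y \<ge> 0 then real_of_int \<lfloor>y * 2^m\<rfloor> - y * 2^m else - real_of_int \<lfloor>- y * 2^m\<rfloor> - y * 2^m)\<bar> \<le> 1"
  proof -
    have "real_of_int \<lfloor>y * 2^m\<rfloor> \<le> y * 2^m" "y * 2^m < real_of_int \<lfloor>y * 2^m\<rfloor> + 1"
      "real_of_int \<lfloor>- y * 2^m\<rfloor> \<le> - y * 2^m" "- y * 2^m < real_of_int \<lfloor>- y * 2^m\<rfloor> + 1" by linarith+
    then show ?thesis by (simp only: abs_le_iff split: if_split) linarith
  qed
  ultimately show ?thesis by (simp add: abs_divide divide_right_mono)
qed

lemma rnd_tendsto: "(\<lambda>m. rnd m y) \<longlonglongrightarrow> y"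
proof -
  have "(\<lambda>m. 1 / 2^m :: real) \<longlonglongrightarrow> 0"
    by (intro LIMSEQ_divide_realpow_zero) auto
  then have "(\<lambda>m. rnd m y - y) \<longlonglongrightarrow> 0"
    by (rule Lim_null_comparison[rotated]) (simp add: rnd_err)
  then show ?thesis by (simp add: LIM_zero_cancel)
qed

lemma rnd_range:
  assumes "\<bar>y\<bar> \<le> T"
  shows "rnd m y \<in> (\<lambda>k. real_of_int k / 2^m) ` {- \<lfloor>T * 2^m\<rfloor> .. \<lfloor>T * 2^m\<rfloor>}"
proof (cases "y \<ge> 0")
  case True
  have a: "0 \<le> \<lfloor>T * 2^m\<rfloor>" using assms by simp
  have c: "\<lfloor>y * 2^m\<rfloor> \<le> \<lfloor>T * 2^m\<rfloor>" using assms True by (intro floor_mono mult_right_mono) auto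
  have b: "0 \<le> \<lfloor>y * 2^m\<rfloor>" using True by simp
  have "\<lfloor>y * 2^m\<rfloor> \<in> {- \<lfloor>T * 2^m\<rfloor> .. \<lfloor>T * 2^m\<rfloor>}" by (intro atLeastAtMost_iff[THEN iffD2] conjI) (use a b c in linarith)+
  then show ?thesis by (rule image_eqI[rotated]) (simp add: rnd_def True)
next
  case False
  have a: "0 \<le> \<lfloor>T * 2^m\<rfloor>" using assms by simp
  have c: "\<lfloor>-y * 2^m\<rfloor> \<le> \<lfloor>T * 2^m\<rfloor>" using assms False by (intro floor_mono mult_right_mono) auto
  have h: "0 \<le> -y * 2^m" using False by (intro mult_nonneg_nonneg) auto
  have b: "0 \<le> \<lfloor>-y * 2^m\<rfloor>" using h by simp
  have "- \<lfloor>-y * 2^m\<rfloor> \<in> {- \<lfloor>T * 2^m\<rfloor> .. \<lfloor>T * 2^m\<rfloor>}" by (intro atLeastAtMost_iff[THEN iffD2] conjI) (use a b c in linarith)+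
  then show ?thesis by (rule image_eqI[rotated]) (simp add: rnd_def False)
qed

lemma rnd_measurable[measurable]: "rnd m \<in> borel_measurable borel"
  unfolding rnd_def by measurable

lemma final_pw:
  fixes Z :: "'g \<Rightarrow> real" and c :: real
  assumes G: "G \<noteq> {}" and c: "c > 0"
  shows "1 + ennreal c * e2ennreal (SUP g\<in>G. ereal (Z g))
     \<le> (SUP g\<in>G. ennreal (exp (c * Z g))) + ennreal c * e2ennreal (- (SUP g\<in>G. ereal (Z g)))"
proof (cases "(SUP g\<in>G. ennreal (exp (c * Z g))) = top")
  case True show ?thesis unfolding True by simp
next
  case False
  define T where "T = (SUP g\<in>G. ennreal (exp (c * Z g)))"
  define S where "S = (SUP g\<in>G. ereal (Z g))"
  obtain t where t: "T = ennreal t" "t \<ge> 0" using False unfolding T_def[symmetric]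
    by (cases T) (auto simp: top_ennreal.rep_eq)
  have Zle: "Z g \<le> (t - 1) / c" if "g \<in> G" for g
  proof -
    have "ennreal (exp (c * Z g)) \<le> T" unfolding T_def using that by (rule SUP_upper)
    then have "exp (c * Z g) \<le> t" using t by (simp add: ennreal_le_iff)
    moreover have "1 + c * Z g \<le> exp (c * Z g)" by (rule exp_ge_add_one_self)
    ultimately have "c * Z g \<le> t - 1" by linarith
    then show ?thesis using c by (simp add: field_simps)
  qed
  obtain g0 where g0: "g0 \<in> G" using G by auto
  have Sup: "S \<le> ereal ((t - 1) / c)" unfolding S_def by (rule SUP_least) (use Zle in auto)
  have Slo: "ereal (Z g0) \<le> S" unfolding S_def using g0 by (rule SUP_upper)
  obtain s where s: "S = ereal s" using Sup Slo by (cases S) auto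
  have st: "1 + c * s \<le> t" using Sup s c by (simp add: field_simps)
  show ?thesis unfolding T_def[symmetric] S_def[symmetric] s
  proof (cases "s \<ge> 0")
    case True
    have "1 + ennreal c * e2ennreal (ereal s) = ennreal (1 + c * s)"
      using True c by (simp add: ennreal_mult)
    also have "\<dots> \<le> T" unfolding t using st by (rule ennreal_leI)
    finally show "1 + ennreal c * e2ennreal (ereal s) \<le> T + ennreal c * e2ennreal (- ereal s)"
      by (rule order_trans) simp
  next
    case False
    have "1 = ennreal 1" by simp
    also have "ennreal 1 \<le> ennreal (t + c * (- s))" using st by (intro ennreal_leI) simp
    also have "\<dots> = T + ennreal c * e2ennreal (- ereal s)"
    proof -
      have "ennreal (t + c * (- s)) = ennreal t + ennreal (c * (- s))"
      proof (rule ennreal_plus)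
        show "0 \<le> c * (- s)" using False c by (intro mult_nonneg_nonneg) auto
      qed (use t in auto)
      also have "ennreal (c * (- s)) = ennreal c * ennreal (- s)"
        by (rule ennreal_mult) (use False c in auto)
      finally show ?thesis using t by simp
    qed
    finally show "1 + ennreal c * e2ennreal (ereal s) \<le> T + ennreal c * e2ennreal (- ereal s)"
      using False by (simp add: e2ennreal_neg ennreal_neg)
  qed
qed

lemma ennreal_exp_split: "ennreal (exp (- a)) * ennreal (exp b) = ennreal (exp (b - a))"
proof -
  have "exp (- a) * exp b = exp (b - a)" by (simp add: mult_exp_exp)
  then show ?thesis by (simp add: ennreal_mult[symmetric])
qed

lemma sup_integral_bound:
  fixes f :: "'g \<Rightarrow> 'a \<Rightarrow> ennreal" and w :: "'g \<Rightarrow> ennreal"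
  assumes G: "countable G" "G \<noteq> {}"
    and fm: "\<And>g. g \<in> G \<Longrightarrow> f g \<in> borel_measurable M"
    and fi: "\<And>g. g \<in> G \<Longrightarrow> (\<integral>\<^sup>+x. f g x \<partial>M) \<le> w g"
    and ws: "\<And>H. finite H \<Longrightarrow> H \<subseteq> G \<Longrightarrow> (\<Sum>g\<in>H. w g) \<le> 1"
  shows "(\<integral>\<^sup>+x. (SUP g\<in>G. f g x) \<partial>M) \<le> 1"
proof -
  define Gm where "Gm m = from_nat_into G ` {..m}" for m
  have GmG: "Gm m \<subseteq> G" for m unfolding Gm_def using from_nat_into[OF G(2)] by auto
  have finGm: "finite (Gm m)" for m unfolding Gm_def by simp
  have U: "(\<Union>m. Gm m) = G"
  proof -
    have "(\<Union>m. Gm m) = range (from_nat_into G)" unfolding Gm_def by auto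
    then show ?thesis using G by simp
  qed
  define h where "h m x = (SUP g\<in>Gm m. f g x)" for m x
  have hm: "h m \<in> borel_measurable M" for m
    unfolding h_def by (rule borel_measurable_SUP) (use finGm GmG fm in \<open>auto intro: countable_finite\<close>)
  have inc: "incseq h"
    unfolding incseq_def le_fun_def h_def Gm_def by (auto intro!: SUP_subset_mono)
  have eq: "(SUP g\<in>G. f g x) = (SUP m. h m x)" for x
    unfolding h_def U[symmetric] by (rule SUP_UNION)
  have "(\<integral>\<^sup>+x. (SUP g\<in>G. f g x) \<partial>M) = (\<integral>\<^sup>+x. (SUP m. h m x) \<partial>M)" by (simp add: eq)
  also have "\<dots> = (SUP m. \<integral>\<^sup>+x. h m x \<partial>M)"
    by (rule nn_integral_monotone_convergence_SUP) (use inc hm in auto)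
  also have "\<dots> \<le> 1"
  proof (rule SUP_least)
    fix m
    have "(\<integral>\<^sup>+x. h m x \<partial>M) \<le> (\<integral>\<^sup>+x. (\<Sum>g\<in>Gm m. f g x) \<partial>M)"
      unfolding h_def by (intro nn_integral_mono SUP_least member_le_sum) (use finGm in auto)
    also have "\<dots> = (\<Sum>g\<in>Gm m. \<integral>\<^sup>+x. f g x \<partial>M)"
      by (rule nn_integral_sum) (use GmG fm in auto)
    also have "\<dots> \<le> (\<Sum>g\<in>Gm m. w g)" by (rule sum_mono) (use GmG fi in auto)
    also have "\<dots> \<le> 1" by (rule ws) (use finGm GmG in auto)
    finally show "(\<integral>\<^sup>+x. h m x \<partial>M) \<le> 1" .
  qed
  finally show ?thesis .
qed

locale cesetup = prob_space M for M :: "'a measure" + fixes F :: "'a measure"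
  assumes subalg: "subalgebra M F"

sublocale cesetup \<subseteq> fms: finite_measure_subalgebra M F
  by unfold_locales (rule subalg)

context cesetup begin

lemma F_meas_M: "f \<in> borel_measurable F \<Longrightarrow> f \<in> borel_measurable M"
  using measurable_from_subalg[OF subalg] by blast

lemma nce_const: "AE x in M. nn_cond_exp M F (\<lambda>_. c) x = c"
  using fms.nn_cond_exp_F_meas[of "\<lambda>_. c"] by auto

lemma nce_cmult:
  assumes [measurable]: "f \<in> borel_measurable M"
  shows "AE x in M. nn_cond_exp M F (\<lambda>x. c * f x) x = c * nn_cond_exp M F f x"
  using fms.nn_cond_exp_prod[of "\<lambda>_. c" f] by auto

lemma nce_SUP:
  assumes [measurable]: "\<And>m. U m \<in> borel_measurable M" and inc: "\<And>m x. U m x \<le> U (Suc m) x"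
  shows "AE x in M. nn_cond_exp M F (\<lambda>x. SUP m. U m x) x = (SUP m. nn_cond_exp M F (U m) x)"
proof -
  have mono: "AE x in M. nn_cond_exp M F (U m) x \<le> nn_cond_exp M F (U (Suc m)) x" for m
    by (rule fms.nn_cond_exp_mono) (auto simp: inc)
  have "AE x in M. (SUP m. nn_cond_exp M F (U m) x) = nn_cond_exp M F (\<lambda>x. SUP m. U m x) x"
  proof (rule fms.nn_cond_exp_charact)
    fix A assume A[measurable]: "A \<in> sets F"
    then have AM[measurable]: "A \<in> sets M" using subalg by (auto simp: subalgebra_def)
    have "(\<integral>\<^sup>+ x \<in> A. (SUP m. U m x) \<partial>M) = (\<integral>\<^sup>+ x. (SUP m. U m x * indicator A x) \<partial>M)"
      by (simp add: SUP_mult_right_ennreal)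
    also have "\<dots> = (SUP m. \<integral>\<^sup>+ x. U m x * indicator A x \<partial>M)"
      by (rule nn_integral_monotone_convergence_SUP_AE) (auto intro!: mult_right_mono inc)
    also have "\<dots> = (SUP m. \<integral>\<^sup>+ x. indicator A x * nn_cond_exp M F (U m) x \<partial>M)"
      by (intro SUP_cong refl) (subst fms.nn_cond_exp_intg, auto simp: mult.commute)
    also have "\<dots> = (\<integral>\<^sup>+ x. (SUP m. indicator A x * nn_cond_exp M F (U m) x) \<partial>M)"
      apply (rule nn_integral_monotone_convergence_SUP_AE[symmetric])
      subgoal for m using mono[of m] by eventually_elim (rule mult_left_mono, auto)
      by auto
    also have "\<dots> = (\<integral>\<^sup>+ x \<in> A. (SUP m. nn_cond_exp M F (U m) x) \<partial>M)"
      by (simp add: SUP_mult_left_ennreal mult.commute)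
    finally show "(\<integral>\<^sup>+ x \<in> A. (SUP m. U m x) \<partial>M) = (\<integral>\<^sup>+ x \<in> A. (SUP m. nn_cond_exp M F (U m) x) \<partial>M)" .
  qed auto
  then show ?thesis by (auto elim: eventually_mono)
qed

lemma nce_sum:
  assumes [measurable]: "\<And>k. k \<in> I \<Longrightarrow> f k \<in> borel_measurable M"
  shows "AE x in M. nn_cond_exp M F (\<lambda>x. \<Sum>k\<in>I. f k x) x = (\<Sum>k\<in>I. nn_cond_exp M F (f k) x)"
  using assms
proof (induction I rule: infinite_finite_induct)
  case (infinite I) then show ?case using nce_const[of 0] by simp
next
  case empty then show ?case using nce_const[of 0] by simp
next
  case (insert k I)
  have [measurable]: "f k \<in> borel_measurable M" "(\<lambda>x. \<Sum>k\<in>I. f k x) \<in> borel_measurable M"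
    using insert by auto
  have 1: "AE x in M. nn_cond_exp M F (f k) x + nn_cond_exp M F (\<lambda>x. \<Sum>k\<in>I. f k x) x =
          nn_cond_exp M F (\<lambda>x. f k x + (\<Sum>k\<in>I. f k x)) x"
    by (rule fms.nn_cond_exp_sum) auto
  have 2: "AE x in M. nn_cond_exp M F (\<lambda>x. \<Sum>k\<in>I. f k x) x = (\<Sum>k\<in>I. nn_cond_exp M F (f k) x)"
    using insert by auto
  from 1 2 show ?case by eventually_elim (use insert in auto)
qed

lemma nce_suminf:
  assumes [measurable]: "\<And>k. f k \<in> borel_measurable M"
  shows "AE x in M. nn_cond_exp M F (\<lambda>x. \<Sum>k. f k x) x = (\<Sum>k. nn_cond_exp M F (f k) x)"
proof -
  have "AE x in M. nn_cond_exp M F (\<lambda>x. SUP n. \<Sum>k<n. f k x) x = (SUP n. nn_cond_exp M F (\<lambda>x. \<Sum>k<n. f k x) x)"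
    by (rule nce_SUP) (auto intro: sum_mono2)
  moreover have "AE x in M. \<forall>n. nn_cond_exp M F (\<lambda>x. \<Sum>k<n. f k x) x = (\<Sum>k<n. nn_cond_exp M F (f k) x)"
    by (subst AE_all_countable) (auto intro: nce_sum)
  ultimately show ?thesis by eventually_elim (simp add: suminf_eq_SUP)
qed

lemma nce_fact_step:
  fixes R Q :: "'a \<Rightarrow> ennreal" and ej :: "'a \<Rightarrow> real"
  assumes [measurable]: "ej \<in> borel_measurable M" "R \<in> borel_measurable M"
    and ind: "\<And>A. A \<in> sets borel \<Longrightarrow> AE x in M. nn_cond_exp M F (\<lambda>x. indicator A (ej x) * R x) x
              = nn_cond_exp M F (\<lambda>x. indicator A (ej x)) x * Q x"
    and u[measurable]: "u \<in> borel_measurable borel"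
  shows "AE x in M. nn_cond_exp M F (\<lambda>x. u (ej x) * R x) x = nn_cond_exp M F (\<lambda>x. u (ej x)) x * Q x"
  using u
proof (induction u rule: borel_measurable_induct)
  case (cong f g)
  then have "f = g" by auto
  then show ?case using cong by simp
next
  case (set A) then show ?case by (rule ind)
next
  case (mult u c)
  note [measurable] = mult(2)
  have 1: "AE x in M. nn_cond_exp M F (\<lambda>x. c * (u (ej x) * R x)) x = c * nn_cond_exp M F (\<lambda>x. u (ej x) * R x) x"
    by (rule nce_cmult) auto
  have 2: "AE x in M. nn_cond_exp M F (\<lambda>x. c * u (ej x)) x = c * nn_cond_exp M F (\<lambda>x. u (ej x)) x"
    by (rule nce_cmult) auto
  from 1 2 mult(4) show ?case by eventually_elim (simp add: mult.assoc)
next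
  case (add u v)
  have [measurable]: "u \<in> borel_measurable borel" "v \<in> borel_measurable borel" using add by auto
  have 1: "AE x in M. nn_cond_exp M F (\<lambda>x. v (ej x) * R x + u (ej x) * R x) x
     = nn_cond_exp M F (\<lambda>x. v (ej x) * R x) x + nn_cond_exp M F (\<lambda>x. u (ej x) * R x) x"
    using fms.nn_cond_exp_sum[of "\<lambda>x. v (ej x) * R x" "\<lambda>x. u (ej x) * R x"]
    by (auto elim!: eventually_mono)
  have 2: "AE x in M. nn_cond_exp M F (\<lambda>x. v (ej x) + u (ej x)) x
     = nn_cond_exp M F (\<lambda>x. v (ej x)) x + nn_cond_exp M F (\<lambda>x. u (ej x)) x"
    using fms.nn_cond_exp_sum[of "\<lambda>x. v (ej x)" "\<lambda>x. u (ej x)"]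
    by (auto elim!: eventually_mono)
  have 3: "AE x in M. nn_cond_exp M F (\<lambda>x. u (ej x) * R x) x = nn_cond_exp M F (\<lambda>x. u (ej x)) x * Q x"
    using add by simp
  have 4: "AE x in M. nn_cond_exp M F (\<lambda>x. v (ej x) * R x) x = nn_cond_exp M F (\<lambda>x. v (ej x)) x * Q x"
    using add by simp
  have e: "(\<lambda>x. (v (ej x) + u (ej x)) * R x) = (\<lambda>x. v (ej x) * R x + u (ej x) * R x)"
    by (simp add: distrib_right)
  from 1 2 3 4 show ?case unfolding e
    by eventually_elim (simp add: distrib_right)
next
  case (seq U)
  have [measurable]: "U m \<in> borel_measurable borel" for m using seq by auto
  have inc: "U m y \<le> U (Suc m) y" for m y using seq by (auto simp: incseq_def le_fun_def)
  have 1: "AE x in M. nn_cond_exp M F (\<lambda>x. SUP m. U m (ej x) * R x) x = (SUP m. nn_cond_exp M F (\<lambda>x. U m (ej x) * R x) x)"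
    by (rule nce_SUP) (auto intro!: mult_right_mono inc)
  have 2: "AE x in M. nn_cond_exp M F (\<lambda>x. SUP m. U m (ej x)) x = (SUP m. nn_cond_exp M F (\<lambda>x. U m (ej x)) x)"
    by (rule nce_SUP) (auto intro!: inc)
  have 3: "AE x in M. \<forall>m. nn_cond_exp M F (\<lambda>x. U m (ej x) * R x) x = nn_cond_exp M F (\<lambda>x. U m (ej x)) x * Q x"
    by (subst AE_all_countable) (use seq in auto)
  from 1 2 3 show ?case
    by eventually_elim (simp add: SUP_mult_right_ennreal image_comp)
qed

lemma nce_prod_indep:
  fixes e :: "nat \<Rightarrow> 'a \<Rightarrow> real" and h :: "nat \<Rightarrow> real \<Rightarrow> ennreal"
  assumes fin: "finite I" and em: "\<And>i. i \<in> I \<Longrightarrow> e i \<in> borel_measurable M"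
    and CI: "\<And>B. (\<And>i. i \<in> I \<Longrightarrow> B i \<in> sets borel) \<Longrightarrow>
       AE x in M. nn_cond_exp M F (\<lambda>x. \<Prod>i\<in>I. indicator (B i) (e i x)) x
         = (\<Prod>i\<in>I. nn_cond_exp M F (\<lambda>x. indicator (B i) (e i x)) x)"
    and hm: "\<And>i. i \<in> I \<Longrightarrow> h i \<in> borel_measurable borel"
  shows "AE x in M. nn_cond_exp M F (\<lambda>x. \<Prod>i\<in>I. h i (e i x)) x
         = (\<Prod>i\<in>I. nn_cond_exp M F (\<lambda>x. h i (e i x)) x)"
proof -
  define P where "P h \<longleftrightarrow> (AE x in M. nn_cond_exp M F (\<lambda>x. \<Prod>i\<in>I. h i (e i x)) x
         = (\<Prod>i\<in>I. nn_cond_exp M F (\<lambda>x. h i (e i x)) x))" for h :: "nat \<Rightarrow> real \<Rightarrow> ennreal"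
  have main: "\<forall>h. (\<forall>i\<in>I. h i \<in> borel_measurable borel) \<longrightarrow>
      (\<forall>i\<in>I-J. \<exists>B\<in>sets borel. h i = indicator B) \<longrightarrow> P h" if "J \<subseteq> I" for J
  proof -
    have "finite J" using that fin finite_subset by auto
    then show ?thesis using that
    proof (induction J rule: finite_induct)
      case empty
      show ?case
      proof (intro allI impI)
        fix h :: "nat \<Rightarrow> real \<Rightarrow> ennreal" assume "\<forall>i\<in>I-{}. \<exists>B\<in>sets borel. h i = indicator B"
        then obtain B where B: "\<And>i. i \<in> I \<Longrightarrow> B i \<in> sets borel \<and> h i = indicator (B i)"
          by (metis Diff_empty)
        have 1: "(\<Prod>i\<in>I. h i (e i x)) = (\<Prod>i\<in>I. indicator (B i) (e i x))" for x
          by (rule prod.cong) (auto simp: B)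
        have 2: "(\<Prod>i\<in>I. nn_cond_exp M F (\<lambda>x. h i (e i x)) x) = (\<Prod>i\<in>I. nn_cond_exp M F (\<lambda>x. indicator (B i) (e i x)) x)" for x
          by (rule prod.cong) (auto simp: B)
        have "\<And>i. i \<in> I \<Longrightarrow> B i \<in> sets borel" using B by blast
        from CI[OF this] show "P h" unfolding P_def 1 2 .
      qed
    next
      case (insert j J)
      show ?case
      proof (intro allI impI)
        fix h :: "nat \<Rightarrow> real \<Rightarrow> ennreal"
        assume hm': "\<forall>i\<in>I. h i \<in> borel_measurable borel"
          and hind: "\<forall>i\<in>I - insert j J. \<exists>B\<in>sets borel. h i = indicator B"
        have jI: "j \<in> I" using insert by auto
        define R where "R x = (\<Prod>i\<in>I-{j}. h i (e i x))" for x
        define Q where "Q x = (\<Prod>i\<in>I-{j}. nn_cond_exp M F (\<lambda>x. h i (e i x)) x)" for x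
        have Rm: "R \<in> borel_measurable M" unfolding R_def
        proof (rule borel_measurable_prod_ennreal)
          fix i assume "i \<in> I - {j}"
          then show "(\<lambda>x. h i (e i x)) \<in> borel_measurable M"
            using measurable_compose[OF em[of i] hm'[rule_format, of i]] by auto
        qed
        have ejm: "e j \<in> borel_measurable M" using em jI by auto
        have split: "(\<Prod>i\<in>I. (h(j:=u)) i (e i x)) = u (e j x) * R x" for u x
          unfolding R_def prod.remove[OF fin jI] by (auto intro!: prod.cong)
        have split2: "(\<Prod>i\<in>I. nn_cond_exp M F (\<lambda>x. (h(j:=u)) i (e i x)) x) = nn_cond_exp M F (\<lambda>x. u (e j x)) x * Q x" for u x
          unfolding Q_def prod.remove[OF fin jI] by (auto intro!: prod.cong)
        have step: "AE x in M. nn_cond_exp M F (\<lambda>x. u (e j x) * R x) x = nn_cond_exp M F (\<lambda>x. u (e j x)) x * Q x"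
          if "u \<in> borel_measurable borel" for u
        proof (rule nce_fact_step[OF ejm Rm _ that])
          fix A :: "real set" assume A: "A \<in> sets borel"
          have "J \<subseteq> I" using insert.prems by auto
          moreover have "\<forall>i\<in>I. (h(j:=indicator A)) i \<in> borel_measurable borel" using hm' A by auto
          moreover have "\<forall>i\<in>I-J. \<exists>B\<in>sets borel. (h(j:=indicator A)) i = indicator B"
            using hind A by auto
          ultimately have "P (h(j:=indicator A))" using insert.IH by blast
          then show "AE x in M. nn_cond_exp M F (\<lambda>x. indicator A (e j x) * R x) x =
              nn_cond_exp M F (\<lambda>x. indicator A (e j x)) x * Q x"
            unfolding P_def split split2 .
        qed
        have "P (h(j := h j))" unfolding P_def split split2 using step[OF hm'[rule_format, OF jI]] .
        then show "P h" by simp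
      qed
    qed
  qed
  show ?thesis using main[of I] hm unfolding P_def by auto
qed

lemma nce_finite:
  assumes [measurable]: "f \<in> borel_measurable M" and fin: "(\<integral>\<^sup>+x. f x \<partial>M) \<noteq> \<infinity>"
  shows "AE x in M. nn_cond_exp M F f x \<noteq> \<infinity>"
proof -
  have "(\<integral>\<^sup>+x. nn_cond_exp M F f x \<partial>M) = (\<integral>\<^sup>+x. f x \<partial>M)"
    using fms.nn_cond_exp_intg[of "\<lambda>_. 1" f] by simp
  then show ?thesis using fin by (intro nn_integral_noteq_infinite) auto
qed

lemma rce_nce_nonneg:
  assumes [measurable]: "f \<in> borel_measurable M" and nn: "\<And>x. 0 \<le> f x" and int: "integrable M f"
  shows "AE x in M. ennreal (real_cond_exp M F f x) = nn_cond_exp M F (\<lambda>x. ennreal (f x)) x"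
proof -
  have "(\<lambda>x. ennreal (- f x)) = (\<lambda>_. 0)" using nn by (auto simp: ennreal_neg)
  then have 1: "AE x in M. nn_cond_exp M F (\<lambda>x. ennreal (- f x)) x = 0" using nce_const[of 0] by simp
  have "(\<integral>\<^sup>+x. ennreal (f x) \<partial>M) \<noteq> \<infinity>"
    using int nn by (auto simp: integrable_iff_bounded)
  then have 2: "AE x in M. nn_cond_exp M F (\<lambda>x. ennreal (f x)) x \<noteq> \<infinity>" by (intro nce_finite) auto
  from 1 2 show ?thesis
  proof eventually_elim
    case (elim x)
    have "ennreal (enn2real (nn_cond_exp M F (\<lambda>x. ennreal (f x)) x)) = nn_cond_exp M F (\<lambda>x. ennreal (f x)) x"
      using elim by (simp add: ennreal_enn2real_if)
    then show ?case using elim unfolding real_cond_exp_def by simp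
  qed
qed

lemma rce_zero_sym:
  assumes [measurable]: "f \<in> borel_measurable M" and int: "integrable M f"
    and z: "AE x in M. real_cond_exp M F f x = 0"
  shows "AE x in M. nn_cond_exp M F (\<lambda>x. ennreal (f x)) x = nn_cond_exp M F (\<lambda>x. ennreal (- f x)) x
     \<and> nn_cond_exp M F (\<lambda>x. ennreal (- f x)) x \<noteq> \<infinity>"
proof -
  have n: "(\<integral>\<^sup>+x. ennreal (norm (f x)) \<partial>M) < \<infinity>"
    using int by (simp add: integrable_iff_bounded)
  have l1: "(\<integral>\<^sup>+x. ennreal (f x) \<partial>M) \<le> (\<integral>\<^sup>+x. ennreal (norm (f x)) \<partial>M)"
    by (intro nn_integral_mono) auto
  have l2: "(\<integral>\<^sup>+x. ennreal (- f x) \<partial>M) \<le> (\<integral>\<^sup>+x. ennreal (norm (f x)) \<partial>M)"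
    by (intro nn_integral_mono) auto
  have 1: "AE x in M. nn_cond_exp M F (\<lambda>x. ennreal (f x)) x \<noteq> \<infinity>"
    by (rule nce_finite) (use order.strict_trans1[OF l1 n] in auto)
  have 2: "AE x in M. nn_cond_exp M F (\<lambda>x. ennreal (- f x)) x \<noteq> \<infinity>"
    by (rule nce_finite) (use order.strict_trans1[OF l2 n] in auto)
  from 1 2 z show ?thesis
  proof eventually_elim
    case (elim x)
    define a where "a = nn_cond_exp M F (\<lambda>x. ennreal (f x)) x"
    define b where "b = nn_cond_exp M F (\<lambda>x. ennreal (- f x)) x"
    have eq: "enn2real a = enn2real b"
      using elim(3) unfolding real_cond_exp_def a_def b_def by simp
    have "a = ennreal (enn2real a)" using elim(1) unfolding a_def by (simp add: ennreal_enn2real_if)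
    also have "\<dots> = ennreal (enn2real b)" by (simp only: eq)
    also have "\<dots> = b" using elim(2) unfolding b_def by (simp add: ennreal_enn2real_if)
    finally show ?case using elim(2) unfolding a_def b_def by simp
  qed
qed

lemma mgf_bound:
  fixes e :: "'a \<Rightarrow> real" and v \<eta> :: real and s :: ennreal
  assumes em[measurable]: "e \<in> borel_measurable M" and int: "integrable M e"
    and m0: "AE x in M. real_cond_exp M F e x = 0"
    and var: "AE x in M. nn_cond_exp M F (\<lambda>x. ennreal ((e x)^2)) x \<le> s"
    and bern: "\<And>k. k \<ge> 3 \<Longrightarrow> AE x in M. nn_cond_exp M F (\<lambda>x. ennreal (\<bar>e x\<bar>^k)) x
        \<le> ennreal (1/2 * fact k * \<eta>^(k-2)) * nn_cond_exp M F (\<lambda>x. ennreal ((e x)^2)) x"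
    and eta: "\<eta> \<ge> 0"
  shows "AE x in M. nn_cond_exp M F (\<lambda>x. ennreal (exp (v * e x))) x
      \<le> 1 + (\<Sum>k. ennreal (\<bar>v\<bar>^(k+2) * \<eta>^k / 2)) * s"
proof -
  define V where "V = nn_cond_exp M F (\<lambda>x. ennreal ((e x)^2))"
  define p where "p x = ennreal (v * e x)" for x
  define q where "q x = ennreal (- (v * e x))" for x
  define R where "R x = ennreal (exp (v * e x) - 1 - v * e x)" for x
  define c where "c k = ennreal (\<bar>v\<bar>^(k+2) / fact (k+2))" for k
  have [measurable]: "p \<in> borel_measurable M" "q \<in> borel_measurable M" "R \<in> borel_measurable M"
    unfolding p_def q_def R_def by auto
  have pw: "ennreal (exp (v * e x)) + q x = 1 + p x + R x" for x
  proof (cases "v * e x \<ge> 0")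
    case True
    have r0: "0 \<le> exp (v * e x) - 1 - v * e x" using exp_ge_add_one_self[of "v * e x"] by linarith
    have "ennreal (1 + v * e x + (exp (v * e x) - 1 - v * e x)) = ennreal (1 + v * e x) + ennreal (exp (v * e x) - 1 - v * e x)"
      by (rule ennreal_plus) (use True r0 in auto)
    also have "ennreal (1 + v * e x) = 1 + ennreal (v * e x)"
      using ennreal_plus[of 1 "v * e x"] True by simp
    finally have 1: "1 + p x + R x = ennreal (1 + v * e x + (exp (v * e x) - 1 - v * e x))"
      unfolding p_def R_def by simp
    have "ennreal (exp (v * e x)) + q x = ennreal (exp (v * e x))"
      using True by (simp add: q_def ennreal_neg)
    also have "\<dots> = ennreal (1 + v * e x + (exp (v * e x) - 1 - v * e x))" by simp
    finally show ?thesis using 1 by simp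
  next
    case False
    have "ennreal (exp (v * e x)) + q x = ennreal (exp (v * e x) + (- (v * e x)))"
      unfolding q_def by (rule ennreal_plus[symmetric]) (use False in auto)
    also have "\<dots> = ennreal (1 + (exp (v * e x) - 1 - v * e x))" by simp
    also have "\<dots> = 1 + R x"
    proof -
      have r0: "0 \<le> exp (v * e x) - 1 - v * e x" using exp_ge_add_one_self[of "v * e x"] by linarith
      have "ennreal (1 + (exp (v * e x) - 1 - v * e x)) = ennreal 1 + R x"
        unfolding R_def by (rule ennreal_plus) (use r0 in auto)
      then show ?thesis by simp
    qed
    finally show ?thesis using False by (simp add: p_def ennreal_neg)
  qed
  have A1: "AE x in M. nn_cond_exp M F (\<lambda>x. ennreal (exp (v * e x)) + q x) x
      = nn_cond_exp M F (\<lambda>x. ennreal (exp (v * e x))) x + nn_cond_exp M F q x"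
    using fms.nn_cond_exp_sum[of "\<lambda>x. ennreal (exp (v * e x))" q] by (auto elim!: eventually_mono)
  have A2a: "AE x in M. nn_cond_exp M F (\<lambda>x. (1 + p x) + R x) x
      = nn_cond_exp M F (\<lambda>x. 1 + p x) x + nn_cond_exp M F R x"
    using fms.nn_cond_exp_sum[of "\<lambda>x. 1 + p x" R] by (auto elim!: eventually_mono)
  have A2b: "AE x in M. nn_cond_exp M F (\<lambda>x. 1 + p x) x
      = nn_cond_exp M F (\<lambda>x. 1) x + nn_cond_exp M F p x"
    using fms.nn_cond_exp_sum[of "\<lambda>x. 1" p] by (auto elim!: eventually_mono)
  have A2c: "AE x in M. nn_cond_exp M F (\<lambda>x. 1) x = 1" by (rule nce_const)
  have A3: "AE x in M. nn_cond_exp M F p x = nn_cond_exp M F q x \<and> nn_cond_exp M F q x \<noteq> \<infinity>"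
  proof (cases "v \<ge> 0")
    case True
    have pe: "p = (\<lambda>x. ennreal v * ennreal (e x))" "q = (\<lambda>x. ennreal v * ennreal (- e x))"
      unfolding p_def q_def using True by (auto simp: ennreal_mult'[symmetric] intro!: ext)
    have 1: "AE x in M. nn_cond_exp M F (\<lambda>x. ennreal v * ennreal (e x)) x = ennreal v * nn_cond_exp M F (\<lambda>x. ennreal (e x)) x"
      by (rule nce_cmult) auto
    have 2: "AE x in M. nn_cond_exp M F (\<lambda>x. ennreal v * ennreal (- e x)) x = ennreal v * nn_cond_exp M F (\<lambda>x. ennreal (- e x)) x"
      by (rule nce_cmult) auto
    from 1 2 rce_zero_sym[OF em int m0] show ?thesis unfolding pe
      by eventually_elim (simp add: ennreal_mult_eq_top_iff)
  next
    case False
    have pe: "p = (\<lambda>x. ennreal (-v) * ennreal (- e x))" "q = (\<lambda>x. ennreal (-v) * ennreal (e x))"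
      unfolding p_def q_def using False by (auto simp: ennreal_mult'[symmetric] intro!: ext)
    have 1: "AE x in M. nn_cond_exp M F (\<lambda>x. ennreal (-v) * ennreal (e x)) x = ennreal (-v) * nn_cond_exp M F (\<lambda>x. ennreal (e x)) x"
      by (rule nce_cmult) auto
    have 2: "AE x in M. nn_cond_exp M F (\<lambda>x. ennreal (-v) * ennreal (- e x)) x = ennreal (-v) * nn_cond_exp M F (\<lambda>x. ennreal (- e x)) x"
      by (rule nce_cmult) auto
    have 3: "AE x in M. nn_cond_exp M F (\<lambda>x. ennreal (e x)) x \<noteq> \<infinity>"
      using rce_zero_sym[OF em int m0] by eventually_elim simp
    from 1 2 3 rce_zero_sym[OF em int m0] show ?thesis unfolding pe
      by eventually_elim (simp add: ennreal_mult_eq_top_iff)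
  qed
  have eqf: "(\<lambda>x. ennreal (exp (v * e x)) + q x) = (\<lambda>x. (1 + p x) + R x)"
    using pw by auto
  have B1: "AE x in M. nn_cond_exp M F (\<lambda>x. ennreal (exp (v * e x))) x = 1 + nn_cond_exp M F R x"
    using A1 A2a A2b A2c A3 unfolding eqf
  proof eventually_elim
    case (elim x)
    have "nn_cond_exp M F q x + nn_cond_exp M F (\<lambda>x. ennreal (exp (v * e x))) x
        = nn_cond_exp M F q x + (1 + nn_cond_exp M F R x)"
      using elim by (simp add: ac_simps)
    then show ?case using elim(5) by (simp add: ennreal_add_left_cancel)
  qed
  have R_le: "R x \<le> (\<Sum>k. c k * ennreal (\<bar>e x\<bar>^(k+2)))" for x
  proof -
    have "R x \<le> (\<Sum>k. ennreal (\<bar>v * e x\<bar>^(k+2) / fact (k+2)))"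
      unfolding R_def by (rule exp_rem_le)
    also have "\<dots> = (\<Sum>k. c k * ennreal (\<bar>e x\<bar>^(k+2)))"
      unfolding c_def by (intro suminf_cong) (simp add: ennreal_mult[symmetric] abs_mult power_mult_distrib)
    finally show ?thesis .
  qed
  have B2: "AE x in M. nn_cond_exp M F R x \<le> nn_cond_exp M F (\<lambda>x. \<Sum>k. c k * ennreal (\<bar>e x\<bar>^(k+2))) x"
    apply (rule fms.nn_cond_exp_mono)
    apply (rule AE_I2, rule R_le)
    by auto
  have B3: "AE x in M. nn_cond_exp M F (\<lambda>x. \<Sum>k. c k * ennreal (\<bar>e x\<bar>^(k+2))) x
      = (\<Sum>k. nn_cond_exp M F (\<lambda>x. c k * ennreal (\<bar>e x\<bar>^(k+2))) x)"
    by (rule nce_suminf) auto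
  have B4: "AE x in M. \<forall>k. nn_cond_exp M F (\<lambda>x. c k * ennreal (\<bar>e x\<bar>^(k+2))) x
      = c k * nn_cond_exp M F (\<lambda>x. ennreal (\<bar>e x\<bar>^(k+2))) x"
    by (subst AE_all_countable) (auto intro!: nce_cmult)
  have B5: "AE x in M. \<forall>k. nn_cond_exp M F (\<lambda>x. ennreal (\<bar>e x\<bar>^(k+2))) x
      \<le> ennreal (1/2 * fact (k+2) * \<eta>^k) * V x"
  proof (subst AE_all_countable, intro allI)
    fix k :: nat
    show "AE x in M. nn_cond_exp M F (\<lambda>x. ennreal (\<bar>e x\<bar>^(k+2))) x \<le> ennreal (1/2 * fact (k+2) * \<eta>^k) * V x"
    proof (cases k)
      case 0
      have "(\<lambda>x. ennreal (\<bar>e x\<bar>^(k+2))) = (\<lambda>x. ennreal ((e x)^2))" using 0 by (simp add: power2_eq_square)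
      then show ?thesis using 0 by (simp add: V_def)
    next
      case (Suc m)
      then show ?thesis using bern[of "k+2"] by (simp add: V_def)
    qed
  qed
  have ck: "c k * ennreal (1/2 * fact (k+2) * \<eta>^k) = ennreal (\<bar>v\<bar>^(k+2) * \<eta>^k / 2)" for k
  proof -
    have "c k * ennreal (1/2 * fact (k+2) * \<eta>^k) = ennreal (\<bar>v\<bar>^(k+2) / fact (k+2) * (1/2 * fact (k+2) * \<eta>^k))"
      unfolding c_def using eta by (simp add: ennreal_mult[symmetric])
    also have "\<bar>v\<bar>^(k+2) / fact (k+2) * (1/2 * fact (k+2) * \<eta>^k) = \<bar>v\<bar>^(k+2) * \<eta>^k / 2"
    proof -
      have gen: "(f::real) \<noteq> 0 \<Longrightarrow> a / f * (1/2 * f * b) = a * b / 2" for a b f by (simp add: field_simps)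
      show ?thesis by (rule gen) simp
    qed
    finally show ?thesis .
  qed
  from B1 B2 B3 B4 B5 var show ?thesis
  proof eventually_elim
    case (elim x)
    have "nn_cond_exp M F (\<lambda>x. ennreal (exp (v * e x))) x
        \<le> 1 + (\<Sum>k. c k * nn_cond_exp M F (\<lambda>x. ennreal (\<bar>e x\<bar>^(k+2))) x)"
      using elim(1,2,3,4) by (simp add: add_left_mono)
    also have "\<dots> \<le> 1 + (\<Sum>k. c k * (ennreal (1/2 * fact (k+2) * \<eta>^k) * V x))"
      by (intro add_left_mono suminf_le summableI mult_left_mono elim(5)[rule_format]) auto
    also have "\<dots> = 1 + (\<Sum>k. ennreal (\<bar>v\<bar>^(k+2) * \<eta>^k / 2)) * V x"
    proof -
      have "(\<Sum>k. c k * (ennreal (1/2 * fact (k+2) * \<eta>^k) * V x))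
          = (\<Sum>k. (c k * ennreal (1/2 * fact (k+2) * \<eta>^k)) * V x)"
        by (simp only: mult.assoc)
      also have "\<dots> = (\<Sum>k. c k * ennreal (1/2 * fact (k+2) * \<eta>^k)) * V x"
        by (rule ennreal_suminf_multc)
      also have "\<dots> = (\<Sum>k. ennreal (\<bar>v\<bar>^(k+2) * \<eta>^k / 2)) * V x"
        by (simp only: ck)
      finally show ?thesis by (simp only:)
    qed
    also have "\<dots> \<le> 1 + (\<Sum>k. ennreal (\<bar>v\<bar>^(k+2) * \<eta>^k / 2)) * s"
      using elim(6) unfolding V_def by (intro add_left_mono mult_left_mono) auto
    finally show ?case .
  qed
qed

lemma core_bound_m:
  fixes e t a :: "nat \<Rightarrow> 'a \<Rightarrow> real" and B :: "real \<Rightarrow> ennreal" and Tb :: real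
  assumes fin: "finite I"
    and em: "\<And>i. i \<in> I \<Longrightarrow> e i \<in> borel_measurable M"
    and CI: "\<And>Bs. (\<And>i. i \<in> I \<Longrightarrow> Bs i \<in> sets borel) \<Longrightarrow>
       AE x in M. nn_cond_exp M F (\<lambda>x. \<Prod>i\<in>I. indicator (Bs i) (e i x)) x
         = (\<Prod>i\<in>I. nn_cond_exp M F (\<lambda>x. indicator (Bs i) (e i x)) x)"
    and mgf: "\<And>i v. i \<in> I \<Longrightarrow> AE x in M. nn_cond_exp M F (\<lambda>x. ennreal (exp (v * e i x))) x \<le> B v"
    and tm: "\<And>i. i \<in> I \<Longrightarrow> t i \<in> borel_measurable F"
    and am: "\<And>i. i \<in> I \<Longrightarrow> a i \<in> borel_measurable F"
    and tb: "\<And>i x. i \<in> I \<Longrightarrow> x \<in> space M \<Longrightarrow> \<bar>t i x\<bar> \<le> Tb"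
    and key: "\<And>i x v. i \<in> I \<Longrightarrow> x \<in> space M \<Longrightarrow> \<bar>v\<bar> \<le> \<bar>t i x\<bar> \<Longrightarrow> ennreal (exp (- a i x)) * B v \<le> 1"
  shows "(\<integral>\<^sup>+x. ennreal (exp (\<Sum>i\<in>I. rnd m (t i x) * e i x - a i x)) \<partial>M) \<le> 1"
proof -
  define V where "V = (\<lambda>k::int. real_of_int k / 2^m) ` {- \<lfloor>Tb * 2^m\<rfloor> .. \<lfloor>Tb * 2^m\<rfloor>}"
  have finV: "finite V" unfolding V_def by simp
  define tr where "tr i x = rnd m (t i x)" for i x
  define \<phi> where "\<phi> i v x = (if tr i x = v then ennreal (exp (- a i x)) else 0)" for i v x
  define \<psi> where "\<psi> p x = (\<Prod>i\<in>I. \<phi> i (p i) x)" for p x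
  define E where "E p x = (\<Prod>i\<in>I. ennreal (exp (p i * e i x)))" for p :: "nat \<Rightarrow> real" and x
  have trV: "tr i x \<in> V" if "i \<in> I" "x \<in> space M" for i x
    unfolding tr_def V_def using tb[OF that] by (rule rnd_range)
  have \<phi>m: "\<phi> i v \<in> borel_measurable F" if "i \<in> I" for i v
  proof -
    note [measurable] = tm[OF that] am[OF that]
    show ?thesis unfolding \<phi>_def tr_def by measurable
  qed
  have \<psi>m: "\<psi> p \<in> borel_measurable F" for p
    unfolding \<psi>_def by (rule borel_measurable_prod_ennreal) (rule \<phi>m)
  have \<psi>mM: "\<psi> p \<in> borel_measurable M" for p by (rule F_meas_M[OF \<psi>m])
  have Em: "E p \<in> borel_measurable M" for p
    unfolding E_def
  proof (rule borel_measurable_prod_ennreal)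
    fix i assume "i \<in> I"
    note [measurable] = em[OF this]
    show "(\<lambda>x. ennreal (exp (p i * e i x))) \<in> borel_measurable M" by measurable
  qed
  have delta: "(\<Sum>v\<in>V. \<phi> i v x * f v) = ennreal (exp (- a i x)) * f (tr i x)" if "i \<in> I" "x \<in> space M" for i x f
  proof -
    have "(\<Sum>v\<in>V. \<phi> i v x * f v) = (\<Sum>v\<in>V. if tr i x = v then ennreal (exp (- a i x)) * f (tr i x) else 0)"
      by (rule sum.cong) (auto simp: \<phi>_def)
    also have "\<dots> = ennreal (exp (- a i x)) * f (tr i x)"
      using trV[OF that] finV by (simp add: sum.delta)
    finally show ?thesis .
  qed
  have pw: "ennreal (exp (\<Sum>i\<in>I. tr i x * e i x - a i x)) = (\<Sum>p\<in>PiE I (\<lambda>_. V). \<psi> p x * E p x)"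
    if x: "x \<in> space M" for x
  proof -
    have "ennreal (exp (\<Sum>i\<in>I. tr i x * e i x - a i x)) = (\<Prod>i\<in>I. ennreal (exp (tr i x * e i x - a i x)))"
      by (simp add: exp_sum fin prod_ennreal)
    also have "\<dots> = (\<Prod>i\<in>I. \<Sum>v\<in>V. \<phi> i v x * ennreal (exp (v * e i x)))"
    proof (rule prod.cong[OF refl])
      fix i assume i: "i \<in> I"
      show "ennreal (exp (tr i x * e i x - a i x)) = (\<Sum>v\<in>V. \<phi> i v x * ennreal (exp (v * e i x)))"
        unfolding delta[OF i x] by (rule ennreal_exp_split[symmetric])
    qed
    also have "\<dots> = (\<Sum>p\<in>PiE I (\<lambda>_. V). \<Prod>i\<in>I. \<phi> i (p i) x * ennreal (exp (p i * e i x)))"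
      by (rule prod_sum_PiE) (use fin finV in auto)
    also have "\<dots> = (\<Sum>p\<in>PiE I (\<lambda>_. V). \<psi> p x * E p x)"
      by (simp add: prod.distrib \<psi>_def E_def)
    finally show ?thesis .
  qed
  have "(\<integral>\<^sup>+x. ennreal (exp (\<Sum>i\<in>I. rnd m (t i x) * e i x - a i x)) \<partial>M)
      = (\<integral>\<^sup>+x. (\<Sum>p\<in>PiE I (\<lambda>_. V). \<psi> p x * E p x) \<partial>M)"
    by (rule nn_integral_cong) (simp add: pw[unfolded tr_def])
  also have "\<dots> = (\<Sum>p\<in>PiE I (\<lambda>_. V). \<integral>\<^sup>+x. \<psi> p x * E p x \<partial>M)"
    by (rule nn_integral_sum) (use \<psi>mM Em in auto)
  also have "\<dots> \<le> (\<Sum>p\<in>PiE I (\<lambda>_. V). \<integral>\<^sup>+x. \<psi> p x * (\<Prod>i\<in>I. B (p i)) \<partial>M)"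
  proof (rule sum_mono)
    fix p :: "nat \<Rightarrow> real" assume p: "p \<in> PiE I (\<lambda>_. V)"
    have "(\<integral>\<^sup>+x. \<psi> p x * E p x \<partial>M) = (\<integral>\<^sup>+x. \<psi> p x * nn_cond_exp M F (E p) x \<partial>M)"
      by (rule fms.nn_cond_exp_intg[symmetric]) (use \<psi>m Em in auto)
    also have "\<dots> \<le> (\<integral>\<^sup>+x. \<psi> p x * (\<Prod>i\<in>I. B (p i)) \<partial>M)"
    proof (rule nn_integral_mono_AE)
      have 1: "AE x in M. nn_cond_exp M F (\<lambda>x. \<Prod>i\<in>I. (\<lambda>y. ennreal (exp (p i * y))) (e i x)) x
          = (\<Prod>i\<in>I. nn_cond_exp M F (\<lambda>x. (\<lambda>y. ennreal (exp (p i * y))) (e i x)) x)"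
        by (rule nce_prod_indep[OF fin em CI]) auto
      have 2: "AE x in M. \<forall>i\<in>I. nn_cond_exp M F (\<lambda>x. ennreal (exp (p i * e i x))) x \<le> B (p i)"
        using fin mgf by (subst AE_finite_all) auto
      from 1 2 show "AE x in M. \<psi> p x * nn_cond_exp M F (E p) x \<le> \<psi> p x * (\<Prod>i\<in>I. B (p i))"
        unfolding E_def by eventually_elim (auto intro!: mult_left_mono prod_mono_ennreal)
    qed
    finally show "(\<integral>\<^sup>+x. \<psi> p x * E p x \<partial>M) \<le> (\<integral>\<^sup>+x. \<psi> p x * (\<Prod>i\<in>I. B (p i)) \<partial>M)" .
  qed
  also have "\<dots> = (\<integral>\<^sup>+x. (\<Sum>p\<in>PiE I (\<lambda>_. V). \<psi> p x * (\<Prod>i\<in>I. B (p i))) \<partial>M)"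
    by (rule nn_integral_sum[symmetric]) (use \<psi>mM in auto)
  also have "\<dots> \<le> (\<integral>\<^sup>+x. 1 \<partial>M)"
  proof (rule nn_integral_mono)
    fix x assume x: "x \<in> space M"
    have "(\<Sum>p\<in>PiE I (\<lambda>_. V). \<psi> p x * (\<Prod>i\<in>I. B (p i))) = (\<Sum>p\<in>PiE I (\<lambda>_. V). \<Prod>i\<in>I. \<phi> i (p i) x * B (p i))"
      by (simp add: prod.distrib \<psi>_def)
    also have "\<dots> = (\<Prod>i\<in>I. \<Sum>v\<in>V. \<phi> i v x * B v)"
      by (rule prod_sum_PiE[symmetric]) (use fin finV in auto)
    also have "\<dots> = (\<Prod>i\<in>I. ennreal (exp (- a i x)) * B (tr i x))"
      by (rule prod.cong[OF refl]) (rule delta[OF _ x])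
    also have "\<dots> \<le> (\<Prod>i\<in>I. 1)"
      by (rule prod_mono_ennreal) (auto intro!: key[OF _ x] simp: tr_def rnd_abs)
    finally show "(\<Sum>p\<in>PiE I (\<lambda>_. V). \<psi> p x * (\<Prod>i\<in>I. B (p i))) \<le> 1" by simp
  qed
  also have "\<dots> = 1" by (simp add: emeasure_space_1)
  finally show ?thesis .
qed

lemma core_bound:
  fixes e t a :: "nat \<Rightarrow> 'a \<Rightarrow> real" and B :: "real \<Rightarrow> ennreal" and Tb :: real
  assumes fin: "finite I"
    and em: "\<And>i. i \<in> I \<Longrightarrow> e i \<in> borel_measurable M"
    and CI: "\<And>Bs. (\<And>i. i \<in> I \<Longrightarrow> Bs i \<in> sets borel) \<Longrightarrow>
       AE x in M. nn_cond_exp M F (\<lambda>x. \<Prod>i\<in>I. indicator (Bs i) (e i x)) x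
         = (\<Prod>i\<in>I. nn_cond_exp M F (\<lambda>x. indicator (Bs i) (e i x)) x)"
    and mgf: "\<And>i v. i \<in> I \<Longrightarrow> AE x in M. nn_cond_exp M F (\<lambda>x. ennreal (exp (v * e i x))) x \<le> B v"
    and tm: "\<And>i. i \<in> I \<Longrightarrow> t i \<in> borel_measurable F"
    and am: "\<And>i. i \<in> I \<Longrightarrow> a i \<in> borel_measurable F"
    and tb: "\<And>i x. i \<in> I \<Longrightarrow> x \<in> space M \<Longrightarrow> \<bar>t i x\<bar> \<le> Tb"
    and key: "\<And>i x v. i \<in> I \<Longrightarrow> x \<in> space M \<Longrightarrow> \<bar>v\<bar> \<le> \<bar>t i x\<bar> \<Longrightarrow> ennreal (exp (- a i x)) * B v \<le> 1"
  shows "(\<integral>\<^sup>+x. ennreal (exp (\<Sum>i\<in>I. t i x * e i x - a i x)) \<partial>M) \<le> 1"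
proof -
  define f where "f m x = ennreal (exp (\<Sum>i\<in>I. rnd m (t i x) * e i x - a i x))" for m x
  have fm: "f m \<in> borel_measurable M" for m
  proof -
    have [measurable]: "(\<lambda>x. \<Sum>i\<in>I. rnd m (t i x) * e i x - a i x) \<in> borel_measurable M"
    proof (rule borel_measurable_sum)
      fix i assume i: "i \<in> I"
      note [measurable] = em[OF i] F_meas_M[OF tm[OF i]] F_meas_M[OF am[OF i]]
      show "(\<lambda>x. rnd m (t i x) * e i x - a i x) \<in> borel_measurable M" by measurable
    qed
    show ?thesis unfolding f_def by measurable
  qed
  have lim: "(\<lambda>m. f m x) \<longlonglongrightarrow> ennreal (exp (\<Sum>i\<in>I. t i x * e i x - a i x))" for x
    unfolding f_def by (intro tendsto_ennrealI tendsto_exp tendsto_sum tendsto_diff tendsto_mult rnd_tendsto tendsto_const)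
  have "(\<integral>\<^sup>+x. ennreal (exp (\<Sum>i\<in>I. t i x * e i x - a i x)) \<partial>M) = (\<integral>\<^sup>+x. liminf (\<lambda>m. f m x) \<partial>M)"
    by (intro nn_integral_cong) (simp add: lim_imp_Liminf[OF trivial_limit_sequentially lim])
  also have "\<dots> \<le> liminf (\<lambda>m. \<integral>\<^sup>+x. f m x \<partial>M)"
    by (rule nn_integral_liminf) (rule fm)
  also have "\<dots> \<le> limsup (\<lambda>m. \<integral>\<^sup>+x. f m x \<partial>M)"
    by (rule Liminf_le_Limsup) simp
  also have "\<dots> \<le> 1"
    by (rule Limsup_bounded) (use core_bound_m[OF fin em CI mgf tm am tb key] in \<open>auto simp: f_def\<close>)
  finally show ?thesis .
qed

lemma CI_from_rce:
  fixes e :: "nat \<Rightarrow> 'a \<Rightarrow> real"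
  assumes fin: "finite I" and em: "\<And>i. i \<in> I \<Longrightarrow> e i \<in> borel_measurable M"
    and cind: "cond_indep_vars M F e I"
    and Bs: "\<And>i. i \<in> I \<Longrightarrow> Bs i \<in> sets borel"
  shows "AE x in M. nn_cond_exp M F (\<lambda>x. \<Prod>i\<in>I. indicator (Bs i) (e i x)) x
         = (\<Prod>i\<in>I. nn_cond_exp M F (\<lambda>x. indicator (Bs i) (e i x)) x)"
proof -
  define f0 where "f0 v = (\<Prod>i\<in>I. indicator (Bs i) (e i v) :: real)" for v
  define fi where "fi i v = (indicator (Bs i) (e i v) :: real)" for i v
  have fim: "fi i \<in> borel_measurable M" if "i \<in> I" for i
  proof -
    note [measurable] = em[OF that] Bs[OF that]
    show ?thesis unfolding fi_def by measurable
  qed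
  have f0m: "f0 \<in> borel_measurable M" unfolding f0_def
    by (rule borel_measurable_prod) (use fim in \<open>unfold fi_def, auto\<close>)
  have f0b: "0 \<le> f0 v \<and> f0 v \<le> 1" for v
    unfolding f0_def by (auto intro!: prod_nonneg prod_le_1)
  have fib: "0 \<le> fi i v \<and> fi i v \<le> 1" for i v unfolding fi_def by auto
  have f0i: "integrable M f0"
    by (rule integrable_const_bound[where B=1]) (use f0m f0b in auto)
  have fii: "integrable M (fi i)" if "i \<in> I" for i
    by (rule integrable_const_bound[where B=1]) (use fim[OF that] fib in auto)
  have c: "AE x in M. real_cond_exp M F f0 x = (\<Prod>i\<in>I. real_cond_exp M F (fi i) x)"
    using cind Bs unfolding cond_indep_vars_def f0_def fi_def by auto
  have a: "AE x in M. ennreal (real_cond_exp M F f0 x) = nn_cond_exp M F (\<lambda>x. ennreal (f0 x)) x"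
    by (rule rce_nce_nonneg) (use f0m f0b f0i in auto)
  have b: "AE x in M. \<forall>i\<in>I. ennreal (real_cond_exp M F (fi i) x) = nn_cond_exp M F (\<lambda>x. ennreal (fi i x)) x
       \<and> 0 \<le> real_cond_exp M F (fi i) x"
  proof (subst AE_finite_all[OF fin], intro ballI)
    fix i assume i: "i \<in> I"
    have 1: "AE x in M. ennreal (real_cond_exp M F (fi i) x) = nn_cond_exp M F (\<lambda>x. ennreal (fi i x)) x"
      by (rule rce_nce_nonneg) (use fim[OF i] fib fii[OF i] in auto)
    have 2: "AE x in M. 0 \<le> real_cond_exp M F (fi i) x"
      by (rule fms.real_cond_exp_pos) (use fim[OF i] fib in auto)
    from 1 2 show "AE x in M. ennreal (real_cond_exp M F (fi i) x) = nn_cond_exp M F (\<lambda>x. ennreal (fi i x)) x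
       \<and> 0 \<le> real_cond_exp M F (fi i) x" by eventually_elim auto
  qed
  have e0: "(\<lambda>x. ennreal (f0 x)) = (\<lambda>x. \<Prod>i\<in>I. indicator (Bs i) (e i x))"
    unfolding f0_def by (auto simp: prod_ennreal[symmetric] ennreal_indicator intro!: ext)
  have ei: "(\<lambda>x. ennreal (fi i x)) = (\<lambda>x. indicator (Bs i) (e i x))" for i
    unfolding fi_def by (auto simp: ennreal_indicator)
  from a b c show ?thesis
  proof eventually_elim
    case (elim x)
    have "nn_cond_exp M F (\<lambda>x. ennreal (f0 x)) x = ennreal (\<Prod>i\<in>I. real_cond_exp M F (fi i) x)"
      using elim by simp
    also have "\<dots> = (\<Prod>i\<in>I. ennreal (real_cond_exp M F (fi i) x))"
      by (rule prod_ennreal[symmetric]) (use elim in auto)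
    also have "\<dots> = (\<Prod>i\<in>I. nn_cond_exp M F (\<lambda>x. ennreal (fi i x)) x)"
      by (rule prod.cong) (use elim in auto)
    finally show ?case unfolding e0 ei .
  qed
qed

lemma cvar_eq:
  assumes [measurable]: "e \<in> borel_measurable M" and z: "AE x in M. real_cond_exp M F e x = 0"
  shows "AE x in M. cond_var M F e x = nn_cond_exp M F (\<lambda>x. ennreal ((e x)^2)) x"
proof -
  have "AE x in M. nn_cond_exp M F (\<lambda>w. ennreal ((e w - real_cond_exp M F e w)^2)) x = nn_cond_exp M F (\<lambda>x. ennreal ((e x)^2)) x"
    by (rule fms.nn_cond_exp_cong) (use z in \<open>auto elim!: eventually_mono\<close>)
  then show ?thesis unfolding cond_var_def .
qed

lemma final_step:
  fixes S :: "'a \<Rightarrow> ereal" and T :: "'a \<Rightarrow> ennreal" and c :: real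
  assumes [measurable]: "S \<in> borel_measurable M" "T \<in> borel_measurable M" and c: "c > 0"
    and pw: "\<And>x. x \<in> space M \<Longrightarrow> 1 + ennreal c * e2ennreal (S x) \<le> T x + ennreal c * e2ennreal (- S x)"
    and T1: "(\<integral>\<^sup>+x. T x \<partial>M) \<le> 1"
  shows "(\<integral>\<^sup>+x. e2ennreal (S x) \<partial>M) \<le> (\<integral>\<^sup>+x. e2ennreal (- S x) \<partial>M)"
proof -
  have [measurable]: "(\<lambda>x. e2ennreal (S x)) \<in> borel_measurable M" "(\<lambda>x. e2ennreal (- S x)) \<in> borel_measurable M"
    by measurable
  have "1 + ennreal c * (\<integral>\<^sup>+x. e2ennreal (S x) \<partial>M) = (\<integral>\<^sup>+x. 1 + ennreal c * e2ennreal (S x) \<partial>M)"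
    by (simp add: nn_integral_add nn_integral_cmult emeasure_space_1)
  also have "\<dots> \<le> (\<integral>\<^sup>+x. T x + ennreal c * e2ennreal (- S x) \<partial>M)"
    by (rule nn_integral_mono) (rule pw)
  also have "\<dots> = (\<integral>\<^sup>+x. T x \<partial>M) + ennreal c * (\<integral>\<^sup>+x. e2ennreal (- S x) \<partial>M)"
    by (simp add: nn_integral_add nn_integral_cmult)
  also have "\<dots> \<le> 1 + ennreal c * (\<integral>\<^sup>+x. e2ennreal (- S x) \<partial>M)"
    using T1 by (rule add_right_mono)
  finally have "ennreal c * (\<integral>\<^sup>+x. e2ennreal (S x) \<partial>M) \<le> ennreal c * (\<integral>\<^sup>+x. e2ennreal (- S x) \<partial>M)"
    by (simp add: ennreal_add_left_cancel_le)
  then show ?thesis using c by (simp add: ennreal_mult_le_mult_iff)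
qed

end
theorem lemma2:
  fixes M :: "'a measure" and N :: "'x measure"
    and X :: "nat \<Rightarrow> 'a \<Rightarrow> 'x" and \<epsilon> :: "nat \<Rightarrow> 'a \<Rightarrow> real"
    and n :: nat and \<sigma> \<eta> K A :: real
    and \<G> :: "('x \<Rightarrow> real) set" and L :: "('x \<Rightarrow> real) \<Rightarrow> real"
  assumes "prob_space M"
    and X_meas: "\<And>i. i \<in> {1..n} \<Longrightarrow> X i \<in> M \<rightarrow>\<^sub>M N"
    and eps_meas: "\<And>i. i \<in> {1..n} \<Longrightarrow> \<epsilon> i \<in> borel_measurable M"
    and eps_int: "\<And>i. i \<in> {1..n} \<Longrightarrow> integrable M (\<epsilon> i)"
    and cind: "cond_indep_vars M (gen_subalg M N X {1..n}) \<epsilon> {1..n}"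
    and mean0: "\<And>i. i \<in> {1..n} \<Longrightarrow>
                  AE w in M. real_cond_exp M (gen_subalg M N X {1..n}) (\<epsilon> i) w = 0"
    and var_bd: "\<And>i. i \<in> {1..n} \<Longrightarrow>
                  AE w in M. cond_var M (gen_subalg M N X {1..n}) (\<epsilon> i) w \<le> ennreal (\<sigma>^2)"
    and bernstein: "\<And>i k. i \<in> {1..n} \<Longrightarrow> k \<ge> 3 \<Longrightarrow>
                  AE w in M. nn_cond_exp M (gen_subalg M N X {1..n}) (\<lambda>v. ennreal (\<bar>\<epsilon> i v\<bar> ^ k)) w
                     \<le> ennreal (1/2 * fact k * \<eta> ^ (k - 2)) * cond_var M (gen_subalg M N X {1..n}) (\<epsilon> i) w"
    and "\<eta> > 0"
    and "countable \<G>"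
    and G_meas: "\<And>g. g \<in> \<G> \<Longrightarrow> g \<in> borel_measurable N"
    and G_bd: "\<And>g x. g \<in> \<G> \<Longrightarrow> \<bar>g x\<bar> \<le> K"
    and L_nonneg: "\<And>g. g \<in> \<G> \<Longrightarrow> L g \<ge> 0"
    and kraft: "(\<Sum>\<^sub>\<infinity>g\<in>\<G>. ennreal (exp (- L g))) \<le> 1"
    and "A > 0"
  shows "let \<gamma> = A * \<sigma>^2 / 2 + K * \<eta>;
             S = (\<lambda>w. SUP g\<in>\<G>. ereal ((1 / real n) * (\<Sum>i=1..n. \<epsilon> i w * g (X i w))
                                        - \<gamma> / real n * L g
                                        - 1 / (A * real n) * (\<Sum>i=1..n. (g (X i w))^2)))
         in (\<integral>\<^sup>+ w. e2ennreal (S w) \<partial>M) \<le> (\<integral>\<^sup>+ w. e2ennreal (- S w) \<partial>M)"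
proof -
  interpret P: prob_space M by fact
  define F where "F = gen_subalg M N X {1..n}"
  define Gs where "Gs = (\<Union>i\<in>{1..n}. {X i -` B \<inter> space M | B. B \<in> sets N})"
  have Gs_sub: "Gs \<subseteq> Pow (space M)" by (auto simp: Gs_def)
  have GsM: "Gs \<subseteq> sets M" using X_meas by (auto simp: Gs_def measurable_sets)
  have sp0: "space (sigma (space M) Gs) = space M" using Gs_sub by simp
  have se0: "sets (sigma (space M) Gs) = sigma_sets (space M) Gs" using Gs_sub by simp
  have "sigma_sets (space M) Gs \<subseteq> sets M" by (rule sets.sigma_sets_subset[OF GsM])
  then have sub0: "subalgebra M (sigma (space M) Gs)"
    unfolding subalgebra_def sp0 se0 by simp
  have subalg: "subalgebra M F"
    using sub0 unfolding F_def gen_subalg_def Gs_def[symmetric]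
    by (auto simp: subalgebra_def space_restr_to_subalg sets_restr_to_subalg)
  interpret C: cesetup M F using \<open>prob_space M\<close> subalg by (simp add: cesetup_def cesetup_axioms_def)
  have spF: "space F = space M" using subalg by (simp add: subalgebra_def)
  have seF: "sets F = sigma_sets (space M) Gs"
    unfolding F_def gen_subalg_def Gs_def[symmetric] using sub0 se0 by (simp add: sets_restr_to_subalg)
  have XF: "X i \<in> F \<rightarrow>\<^sub>M N" if i: "i \<in> {1..n}" for i
  proof (rule measurableI)
    fix x assume "x \<in> space F" then show "X i x \<in> space N"
      using X_meas[OF i] spF by (auto simp: measurable_space)
  next
    fix B assume "B \<in> sets N"
    then have "X i -` B \<inter> space M \<in> Gs" unfolding Gs_def using i by blast
    then show "X i -` B \<inter> space F \<in> sets F" unfolding seF spF by (rule sigma_sets.Basic)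
  qed
  have gXF: "(\<lambda>x. g (X i x)) \<in> borel_measurable F" if "g \<in> \<G>" "i \<in> {1..n}" for g i
    using measurable_compose[OF XF[OF that(2)] G_meas[OF that(1)]] .
  have gXM: "(\<lambda>x. g (X i x)) \<in> borel_measurable M" if "g \<in> \<G>" "i \<in> {1..n}" for g i
    using C.F_meas_M[OF gXF[OF that]] .
  note cind' = cind[folded F_def] and mean0' = mean0[folded F_def]
    and var_bd' = var_bd[folded F_def] and bernstein' = bernstein[folded F_def]
  define \<gamma> where "\<gamma> = A * \<sigma>^2 / 2 + K * \<eta>"
  define Z where "Z g w = (1 / real n) * (\<Sum>i=1..n. \<epsilon> i w * g (X i w)) - \<gamma> / real n * L g
                          - 1 / (A * real n) * (\<Sum>i=1..n. (g (X i w))^2)" for g w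
  have Zm: "(\<lambda>w. Z g w) \<in> borel_measurable M" if g: "g \<in> \<G>" for g
  proof -
    have 1: "(\<lambda>w. \<Sum>i=1..n. \<epsilon> i w * g (X i w)) \<in> borel_measurable M"
    proof (rule borel_measurable_sum)
      fix i assume i: "i \<in> {1..n}"
      note [measurable] = eps_meas[OF i] gXM[OF g i]
      show "(\<lambda>w. \<epsilon> i w * g (X i w)) \<in> borel_measurable M" by measurable
    qed
    have 2: "(\<lambda>w. \<Sum>i=1..n. (g (X i w))^2) \<in> borel_measurable M"
    proof (rule borel_measurable_sum)
      fix i assume i: "i \<in> {1..n}"
      note [measurable] = gXM[OF g i]
      show "(\<lambda>w. (g (X i w))^2) \<in> borel_measurable M" by measurable
    qed
    note [measurable] = 1 2
    show ?thesis unfolding Z_def by measurable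
  qed
  define S where "S w = (SUP g\<in>\<G>. ereal (Z g w))" for w
  have Sm: "S \<in> borel_measurable M"
    unfolding S_def by (rule borel_measurable_SUP) (use \<open>countable \<G>\<close> Zm in auto)
  have main: "(\<integral>\<^sup>+ w. e2ennreal (S w) \<partial>M) \<le> (\<integral>\<^sup>+ w. e2ennreal (- S w) \<partial>M)"
  proof (cases "n = 0 \<or> \<G> = {} \<or> K \<le> 0")
    case True
    have "S w \<le> 0" for w
      unfolding S_def
    proof (rule SUP_least)
      fix g assume g: "g \<in> \<G>"
      then have K0: "K \<ge> 0" using G_bd[OF g, of undefined] by linarith
      have "Z g w \<le> 0"
      proof (cases "n = 0")
        case True then show ?thesis by (simp add: Z_def)
      next
        case False
        then have "K = 0" using \<open>n = 0 \<or> \<G> = {} \<or> K \<le> 0\<close> g K0 by auto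
        then have g0: "g y = 0" for y using G_bd[OF g, of y] by simp
        have "\<gamma> \<ge> 0" unfolding \<gamma>_def using \<open>A > 0\<close> \<open>K = 0\<close> by simp
        then have "\<gamma> / real n * L g \<ge> 0" using L_nonneg[OF g] by simp
        then show ?thesis by (simp add: Z_def g0)
      qed
      then show "ereal (Z g w) \<le> 0" by simp
    qed
    then have "(\<integral>\<^sup>+ w. e2ennreal (S w) \<partial>M) = 0" by (simp add: e2ennreal_neg)
    then show ?thesis by simp
  next
    case False
    then have n0: "n > 0" and Gne: "\<G> \<noteq> {}" and Kp: "K > 0" by auto
    have gp: "\<gamma> > 0" unfolding \<gamma>_def using \<open>A > 0\<close> Kp \<open>\<eta> > 0\<close>
      by (intro add_nonneg_pos) auto
    define c where "c = real n / \<gamma>"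
    have cp: "c > 0" unfolding c_def using n0 gp by simp
    define Bf where "Bf v = 1 + (\<Sum>k. ennreal (\<bar>v\<bar>^(k+2) * \<eta>^k / 2)) * ennreal (\<sigma>^2)" for v
    have CI: "AE x in M. nn_cond_exp M F (\<lambda>x. \<Prod>i\<in>{1..n}. indicator (Bs i) (\<epsilon> i x)) x
         = (\<Prod>i\<in>{1..n}. nn_cond_exp M F (\<lambda>x. indicator (Bs i) (\<epsilon> i x)) x)"
      if "\<And>i. i \<in> {1..n} \<Longrightarrow> Bs i \<in> sets borel" for Bs
      by (rule C.CI_from_rce[OF _ eps_meas cind' that]) auto
    have mgf: "AE x in M. nn_cond_exp M F (\<lambda>x. ennreal (exp (v * \<epsilon> i x))) x \<le> Bf v"
      if i: "i \<in> {1..n}" for i v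
    proof -
      have cv: "AE x in M. cond_var M F (\<epsilon> i) x = nn_cond_exp M F (\<lambda>x. ennreal ((\<epsilon> i x)^2)) x"
        by (rule C.cvar_eq[OF eps_meas[OF i] mean0'[OF i]])
      show ?thesis unfolding Bf_def
      proof (rule C.mgf_bound[OF eps_meas[OF i] eps_int[OF i] mean0'[OF i]])
        show "AE x in M. nn_cond_exp M F (\<lambda>x. ennreal ((\<epsilon> i x)^2)) x \<le> ennreal (\<sigma>^2)"
          using cv var_bd'[OF i] by eventually_elim simp
        show "AE x in M. nn_cond_exp M F (\<lambda>x. ennreal (\<bar>\<epsilon> i x\<bar>^k)) x
            \<le> ennreal (1/2 * fact k * \<eta>^(k-2)) * nn_cond_exp M F (\<lambda>x. ennreal ((\<epsilon> i x)^2)) x"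
          if "k \<ge> 3" for k
          using cv bernstein'[OF i that] by eventually_elim simp
      qed (use \<open>\<eta> > 0\<close> in simp)
    qed
    define t where "t g i x = g (X i x) / \<gamma>" for g :: "'x \<Rightarrow> real" and i x
    define a where "a g i x = (g (X i x))^2 / (A * \<gamma>)" for g :: "'x \<Rightarrow> real" and i x
    have core: "(\<integral>\<^sup>+x. ennreal (exp (\<Sum>i\<in>{1..n}. t g i x * \<epsilon> i x - a g i x)) \<partial>M) \<le> 1"
      if g: "g \<in> \<G>" for g
    proof (rule C.core_bound[where Tb="K / \<gamma>" and B=Bf])
      show "\<And>i. i \<in> {1..n} \<Longrightarrow> t g i \<in> borel_measurable F"
        unfolding t_def using gXF[OF g] by measurable
      show "\<And>i. i \<in> {1..n} \<Longrightarrow> a g i \<in> borel_measurable F"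
        unfolding a_def using gXF[OF g] by measurable
      show "\<bar>t g i x\<bar> \<le> K / \<gamma>" for i x
        unfolding t_def using G_bd[OF g] gp by (simp add: abs_divide divide_right_mono)
      show "ennreal (exp (- a g i x)) * Bf v \<le> 1" if "\<bar>v\<bar> \<le> \<bar>t g i x\<bar>" for i x v
        unfolding a_def Bf_def
        by (rule key_bound[OF \<open>A > 0\<close> \<open>\<eta> > 0\<close> Kp _ \<gamma>_def G_bd[OF g]])
           (use that gp in \<open>auto simp: t_def abs_divide\<close>)
    qed (use CI mgf eps_meas in auto)
    have Zexp: "ennreal (exp (c * Z g x)) = ennreal (exp (- L g)) * ennreal (exp (\<Sum>i\<in>{1..n}. t g i x * \<epsilon> i x - a g i x))" for g x
    proof -
      have "(\<Sum>i\<in>{1..n}. t g i x * \<epsilon> i x - a g i x)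
          = (\<Sum>i=1..n. \<epsilon> i x * g (X i x)) / \<gamma> - (\<Sum>i=1..n. (g (X i x))^2) / (A * \<gamma>)"
        unfolding t_def a_def by (simp add: sum_subtractf sum_divide_distrib mult.commute)
      also have "\<dots> = c * Z g x + L g"
        unfolding c_def Z_def using n0 gp \<open>A > 0\<close> by (simp add: field_simps)
      finally have "c * Z g x = (\<Sum>i\<in>{1..n}. t g i x * \<epsilon> i x - a g i x) - L g" by simp
      then show ?thesis by (simp add: ennreal_exp_split)
    qed
    have intg: "(\<integral>\<^sup>+x. ennreal (exp (c * Z g x)) \<partial>M) \<le> ennreal (exp (- L g))" if g: "g \<in> \<G>" for g
    proof -
      have m: "(\<lambda>x. ennreal (exp (\<Sum>i\<in>{1..n}. t g i x * \<epsilon> i x - a g i x))) \<in> borel_measurable M"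
      proof -
        have [measurable]: "(\<lambda>x. \<Sum>i\<in>{1..n}. t g i x * \<epsilon> i x - a g i x) \<in> borel_measurable M"
        proof (rule borel_measurable_sum)
          fix i assume i: "i \<in> {1..n}"
          note [measurable] = eps_meas[OF i] gXM[OF g i]
          show "(\<lambda>x. t g i x * \<epsilon> i x - a g i x) \<in> borel_measurable M" unfolding t_def a_def by measurable
        qed
        show ?thesis by measurable
      qed
      have "(\<integral>\<^sup>+x. ennreal (exp (c * Z g x)) \<partial>M)
          = ennreal (exp (- L g)) * (\<integral>\<^sup>+x. ennreal (exp (\<Sum>i\<in>{1..n}. t g i x * \<epsilon> i x - a g i x)) \<partial>M)"
        unfolding Zexp by (rule nn_integral_cmult) (rule m)
      also have "\<dots> \<le> ennreal (exp (- L g)) * 1" by (intro mult_left_mono core[OF g]) simp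
      finally show ?thesis by simp
    qed
    define T where "T x = (SUP g\<in>\<G>. ennreal (exp (c * Z g x)))" for x
    have Tm: "T \<in> borel_measurable M"
      unfolding T_def by (rule borel_measurable_SUP) (use \<open>countable \<G>\<close> Zm in auto)
    have T1: "(\<integral>\<^sup>+x. T x \<partial>M) \<le> 1"
      unfolding T_def
    proof (rule sup_integral_bound[where w="\<lambda>g. ennreal (exp (- L g))"])
      show "\<And>g. g \<in> \<G> \<Longrightarrow> (\<lambda>x. ennreal (exp (c * Z g x))) \<in> borel_measurable M"
        using Zm by measurable
      fix H assume H: "finite H" "H \<subseteq> \<G>"
      have "(\<Sum>g\<in>H. ennreal (exp (- L g))) \<le> (\<Sum>\<^sub>\<infinity>g\<in>\<G>. ennreal (exp (- L g)))"
        unfolding nonneg_infsum_complete[of \<G> "\<lambda>g. ennreal (exp (- L g))", OF zero_le]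
        by (rule SUP_upper) (use H in auto)
      also have "\<dots> \<le> 1" by (rule kraft)
      finally show "(\<Sum>g\<in>H. ennreal (exp (- L g))) \<le> 1" .
    qed (use \<open>countable \<G>\<close> Gne intg in auto)
    show ?thesis
    proof (rule C.final_step[OF Sm Tm cp _ T1])
      fix x
      show "1 + ennreal c * e2ennreal (S x) \<le> T x + ennreal c * e2ennreal (- S x)"
        unfolding S_def T_def by (rule final_pw[OF Gne cp])
    qed
  qed
  show ?thesis using main unfolding Let_def S_def Z_def \<gamma>_def .
qed

end
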